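(* Generalised Outer Multi-Objective RL (GOMORL), Occupancy Measure Orderings (OMO) and Trajectory Lottery Orderings (TLO) are equally expressive: for every environment $E$, $\mathrm{Ord}_{\mathrm{GOMORL}}(E)=\mathrm{Ord}_{\mathrm{OMO}}(E)=\mathrm{Ord}_{\mathrm{TLO}}(E)$.
   Context: An environment is a tuple $E=(\mathcal S,\mathcal A,\mathcal T,\mathcal I)$ where $\mathcal S,\mathcal A$ are finite nonempty sets, $\mathcal T:\mathcal S\times\mathcal A\to\Delta(\mathcal S)$ and $\mathcal I\in\Delta(\mathcal S)$. A policy is a map $\pi:\mathcal S\to\Delta(\mathcal A)$ (stationary, possibly stochastic); $\Pi^E$ denotes the set of all policies. A trajectory $\xi=(s_0,a_0,s_1,a_1,\dots)$ is generated under $\pi$ by $s_0\sim\mathcal I$, $a_t\sim\pi(s_t)$, $s_{t+1}\sim\mathcal T(s_t,a_t)$; $\mathbb E^\pi_\xi,\mathbb P^\pi$ denote expectation and probability under this distribution. An objective-specification formalism $X$ assigns to each environment $E$ a set of objective specifications, each inducing a total preorder $\succeq$ on $\Pi^E$; $\mathrm{Ord}_X(E)$ is the set of total preorders so induced. Occupancy measure: for $\gamma\in[0,1)$, $\vec m_\gamma(\pi)\in\mathbb R^{\mathcal S\times\mathcal A\times\mathcal S}$, $\vec m_\gamma(\pi)[s,a,s']=\sum_{t=0}^\infty\gamma^t\,\mathbb P^\pi[s_t=s,a_t=a,s_{t+1}=s']$, and $\vec m_\gamma(\Pi^E)=\{\vec m_\gamma(\pi):\pi\in\Pi^E\}$.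 Trajectory lottery: $L_{k,\pi}$ is the distribution of $(s_0,a_0,\dots,a_{k-1},s_k)$ under $\pi$, $L_\pi=(L_{0,\pi},L_{1,\pi},\dots)$, and $L_{\Pi^E}=\{L_\pi:\pi\in\Pi^E\}$. GOMORL: specification $(k,\mathcal R,\gamma,\succeq_J)$ with $k\in\mathbb N$, $\mathcal R:\mathcal S\times\mathcal A\times\mathcal S\to\mathbb R^k$ with components $\mathcal R_i$, $\gamma\in[0,1)$, $\succeq_J$ a total preorder on $\mathbb R^k$; with $\vec J(\pi)=(J_1(\pi),\dots,J_k(\pi))$, $J_i(\pi)=\mathbb E^\pi_\xi[\sum_{t=0}^\infty\gamma^t\mathcal R_i(s_t,a_t,s_{t+1})]$, it induces $\pi_1\succeq\pi_2\iff\vec J(\pi_1)\succeq_J\vec J(\pi_2)$. OMO: specification $(\gamma,\succeq_m)$ with $\gamma\in[0,1)$ and $\succeq_m$ a total preorder on $\vec m_\gamma(\Pi^E)$; it induces $\pi_1\succeq\pi_2\iff\vec m_\gamma(\pi_1)\succeq_m\vec m_\gamma(\pi_2)$. TLO: specification $(\succeq_L)$ with $\succeq_L$ a total preorder on $L_{\Pi^E}$; it induces $\pi_1\succeq\pi_2\iff L_{\pi_1}\succeq_L L_{\pi_2}$. *)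

theory Defs
  imports "HOL-Probability.Probability"
begin

text \<open>An environment with finite state type 's and finite action type 'a is given by
  a transition kernel T and an initial distribution I.\<close>

type_synonym ('s, 'a) policy = "'s \<Rightarrow> 'a pmf"

text \<open>Distribution of the trajectory prefix (s_0,a_0,...,a_{k-1},s_k), represented as the
  pair ([(s_0,a_0),...,(s_{k-1},a_{k-1})], s_k).  This is L_{k,pi}.\<close>
fun traj :: "('s \<Rightarrow> 'a \<Rightarrow> 's pmf) \<Rightarrow> 's pmf \<Rightarrow> ('s, 'a) policy \<Rightarrow> nat
    \<Rightarrow> (('s \<times> 'a) list \<times> 's) pmf" where
  "traj T I \<pi> 0 = map_pmf (\<lambda>s. ([], s)) I"
| "traj T I \<pi> (Suc k) =
     bind_pmf (traj T I \<pi> k) (\<lambda>(h, s).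
       bind_pmf (\<pi> s) (\<lambda>a. map_pmf (\<lambda>s'. (h @ [(s, a)], s')) (T s a)))"

definition lottery :: "('s \<Rightarrow> 'a \<Rightarrow> 's pmf) \<Rightarrow> 's pmf \<Rightarrow> ('s, 'a) policy
    \<Rightarrow> nat \<Rightarrow> (('s \<times> 'a) list \<times> 's) pmf" where
  "lottery T I \<pi> = (\<lambda>k. traj T I \<pi> k)"

definition step_prob :: "('s \<Rightarrow> 'a \<Rightarrow> 's pmf) \<Rightarrow> 's pmf \<Rightarrow> ('s, 'a) policy
    \<Rightarrow> nat \<Rightarrow> 's \<Rightarrow> 'a \<Rightarrow> 's \<Rightarrow> real" where
  "step_prob T I \<pi> t s a s' =
     measure_pmf.prob (traj T I \<pi> (Suc t)) {(h, s''). h ! t = (s, a) \<and> s'' = s'}"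

definition occupancy :: "('s \<Rightarrow> 'a \<Rightarrow> 's pmf) \<Rightarrow> 's pmf \<Rightarrow> real \<Rightarrow> ('s, 'a) policy
    \<Rightarrow> ('s \<times> 'a \<times> 's) \<Rightarrow> real" where
  "occupancy T I \<gamma> \<pi> = (\<lambda>(s, a, s'). \<Sum>t. \<gamma> ^ t * step_prob T I \<pi> t s a s')"

text \<open>Expected discounted return J(pi) = E[sum_t gamma^t R(s_t,a_t,s_{t+1})], written as the
  series of expectations of the per-step rewards (the state/action spaces are finite, so
  rewards are bounded and the expectation commutes with the discounted sum).\<close>
definition ret :: "('s \<Rightarrow> 'a \<Rightarrow> 's pmf) \<Rightarrow> 's pmf \<Rightarrow> real
    \<Rightarrow> ('s \<Rightarrow> 'a \<Rightarrow> 's \<Rightarrow> real) \<Rightarrow> ('s, 'a) policy \<Rightarrow> real" where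
  "ret T I \<gamma> R \<pi> =
     (\<Sum>t. \<gamma> ^ t * measure_pmf.expectation (traj T I \<pi> (Suc t))
                     (\<lambda>(h, s'). R (fst (h ! t)) (snd (h ! t)) s'))"

text \<open>Vector of returns (J_1,...,J_k) for a k-dimensional reward R, as a list of length k
  (component i of R is R s a s' i, i < k).\<close>
definition ret_vec :: "('s \<Rightarrow> 'a \<Rightarrow> 's pmf) \<Rightarrow> 's pmf \<Rightarrow> nat \<Rightarrow> real
    \<Rightarrow> ('s \<Rightarrow> 'a \<Rightarrow> 's \<Rightarrow> nat \<Rightarrow> real) \<Rightarrow> ('s, 'a) policy \<Rightarrow> real list" where
  "ret_vec T I k \<gamma> R \<pi> = map (\<lambda>i. ret T I \<gamma> (\<lambda>s a s'. R s a s' i) \<pi>) [0..<k]"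

definition total_preorder_on :: "'x set \<Rightarrow> ('x \<Rightarrow> 'x \<Rightarrow> bool) \<Rightarrow> bool" where
  "total_preorder_on D r \<longleftrightarrow>
     (\<forall>x\<in>D. r x x) \<and>
     (\<forall>x\<in>D. \<forall>y\<in>D. \<forall>z\<in>D. r x y \<longrightarrow> r y z \<longrightarrow> r x z) \<and>
     (\<forall>x\<in>D. \<forall>y\<in>D. r x y \<or> r y x)"

definition Ord_GOMORL :: "('s::finite \<Rightarrow> 'a::finite \<Rightarrow> 's pmf) \<Rightarrow> 's pmf
    \<Rightarrow> (('s, 'a) policy \<Rightarrow> ('s, 'a) policy \<Rightarrow> bool) set" where
  "Ord_GOMORL T I = {ord. \<exists>k R \<gamma> geJ.
      0 \<le> \<gamma> \<and> \<gamma> < 1 \<and> total_preorder_on {v :: real list. length v = k} geJ \<and>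
      ord = (\<lambda>\<pi>1 \<pi>2. geJ (ret_vec T I k \<gamma> R \<pi>1) (ret_vec T I k \<gamma> R \<pi>2))}"

definition Ord_OMO :: "('s::finite \<Rightarrow> 'a::finite \<Rightarrow> 's pmf) \<Rightarrow> 's pmf
    \<Rightarrow> (('s, 'a) policy \<Rightarrow> ('s, 'a) policy \<Rightarrow> bool) set" where
  "Ord_OMO T I = {ord. \<exists>\<gamma> gem.
      0 \<le> \<gamma> \<and> \<gamma> < 1 \<and> total_preorder_on (range (occupancy T I \<gamma>)) gem \<and>
      ord = (\<lambda>\<pi>1 \<pi>2. gem (occupancy T I \<gamma> \<pi>1) (occupancy T I \<gamma> \<pi>2))}"

definition Ord_TLO :: "('s::finite \<Rightarrow> 'a::finite \<Rightarrow> 's pmf) \<Rightarrow> 's pmf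
    \<Rightarrow> (('s, 'a) policy \<Rightarrow> ('s, 'a) policy \<Rightarrow> bool) set" where
  "Ord_TLO T I = {ord. \<exists>geL.
      total_preorder_on (range (lottery T I)) geL \<and>
      ord = (\<lambda>\<pi>1 \<pi>2. geL (lottery T I \<pi>1) (lottery T I \<pi>2))}"

end

theory Submission
  imports Defs
begin


lemma traj_len: "x \<in> set_pmf (traj T I \<pi> t) \<Longrightarrow> length (fst x) = t"
  by (induction t arbitrary: x) (auto split: prod.splits)

definition st where "st T I \<pi> t = map_pmf snd (traj T I \<pi> t)"

lemma map_step: "map_pmf (\<lambda>(h,s''). (h!t, s'')) (traj T I \<pi> (Suc t)) =
   bind_pmf (st T I \<pi> t) (\<lambda>s. bind_pmf (\<pi> s) (\<lambda>a. map_pmf (\<lambda>s'. ((s,a),s')) (T s a)))"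
  unfolding st_def bind_map_pmf
  apply (simp add: map_bind_pmf pmf.map_comp o_def)
  apply (rule bind_pmf_cong, simp)
  apply (drule traj_len)
  apply (auto split: prod.splits simp: map_bind_pmf pmf.map_comp o_def)
  done

lemma pmf_map_pair: "pmf (map_pmf (\<lambda>x. (c,x)) M) (c', y) = (if c = c' then pmf M y else 0)"
proof (cases "c = c'")
  case True
  have "inj (Pair c)" by (auto simp: inj_def)
  then show ?thesis using True pmf_map_inj'[of "Pair c" M y] by simp
next
  case False
  then show ?thesis by (subst pmf_map_outside) auto
qed

lemma pmf_K: "pmf (bind_pmf (\<pi> y) (\<lambda>a. map_pmf (\<lambda>s'. ((y,a),s')) (T y a))) ((s,a),s') =
   (if y = s then pmf (\<pi> s) a * pmf (T s a) s' else 0)"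
proof -
  have "pmf (bind_pmf (\<pi> y) (\<lambda>a. map_pmf (\<lambda>s'. ((y,a),s')) (T y a))) ((s,a),s') =
     (\<integral>a'. (if y = s \<and> a' = a then pmf (T s a) s' else 0) \<partial>measure_pmf (\<pi> y))"
    unfolding pmf_bind by (rule Bochner_Integration.integral_cong) (auto simp: pmf_map_pair)
  also have "\<dots> = (if y = s then pmf (\<pi> s) a * pmf (T s a) s' else 0)"
    by (subst integral_measure_pmf_real[where A="{a}"]) (auto split: if_splits)
  finally show ?thesis .
qed

lemma step_prob_eq: "step_prob T I \<pi> t s a s' = pmf (st T I \<pi> t) s * pmf (\<pi> s) a * pmf (T s a) s'"
proof -
  have "step_prob T I \<pi> t s a s' = pmf (map_pmf (\<lambda>(h,s''). (h!t, s'')) (traj T I \<pi> (Suc t))) ((s,a),s')"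
    unfolding step_prob_def pmf_map
    by (rule arg_cong[where f="measure_pmf.prob _"]) auto
  also have "\<dots> = pmf (st T I \<pi> t) s * pmf (\<pi> s) a * pmf (T s a) s'"
    unfolding map_step pmf_bind[of "st T I \<pi> t"]
    apply (subst Bochner_Integration.integral_cong[OF refl, of _ _ "\<lambda>y. (if y = s then pmf (\<pi> s) a * pmf (T s a) s' else 0)"])
     apply (rule pmf_K)
    by (subst integral_measure_pmf_real[where A="{s}"]) (auto split: if_splits)
  finally show ?thesis .
qed


lemma step_prob_pmf: "step_prob T I \<pi> t s a s' =
   pmf (map_pmf (\<lambda>(h,s''). (fst (h!t), snd (h!t), s'')) (traj T I \<pi> (Suc t))) (s,a,s')"
  unfolding step_prob_def pmf_map
  by (rule arg_cong[where f="measure_pmf.prob _"]) auto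

lemma summable_sp:
  assumes "0 \<le> \<gamma>" "\<gamma> < 1"
  shows "summable (\<lambda>t. \<gamma> ^ t * step_prob T I \<pi> t s a s')"
proof (rule summable_comparison_test[where g="\<lambda>t. \<gamma> ^ t"])
  show "\<exists>N. \<forall>n\<ge>N. norm (\<gamma> ^ n * step_prob T I \<pi> n s a s') \<le> \<gamma> ^ n"
    using assms by (auto simp: step_prob_pmf abs_mult intro!: mult_left_le pmf_le_1)
  show "summable (\<lambda>t. \<gamma> ^ t)" using assms by (simp add: summable_geometric)
qed

lemma ret_lin:
  fixes T :: "'s::finite \<Rightarrow> 'a::finite \<Rightarrow> 's pmf"
  assumes "0 \<le> \<gamma>" "\<gamma> < 1"
  shows "ret T I \<gamma> R \<pi> = (\<Sum>x\<in>UNIV. (case x of (s,a,s') \<Rightarrow> R s a s') * occupancy T I \<gamma> \<pi> x)"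
proof -
  let ?R = "\<lambda>x. (case x of (s,a,s') \<Rightarrow> R s a s')"
  have e: "measure_pmf.expectation (traj T I \<pi> (Suc t)) (\<lambda>(h, s'). R (fst (h ! t)) (snd (h ! t)) s')
      = (\<Sum>x\<in>UNIV. ?R x * (case x of (s,a,s') \<Rightarrow> step_prob T I \<pi> t s a s'))" for t
  proof -
    have "measure_pmf.expectation (traj T I \<pi> (Suc t)) (\<lambda>(h, s'). R (fst (h ! t)) (snd (h ! t)) s')
       = measure_pmf.expectation (map_pmf (\<lambda>(h,s''). (fst (h!t), snd (h!t), s'')) (traj T I \<pi> (Suc t))) ?R"
      unfolding integral_map_pmf by (rule Bochner_Integration.integral_cong) auto
    also have "\<dots> = (\<Sum>x\<in>UNIV. ?R x * pmf (map_pmf (\<lambda>(h,s''). (fst (h!t), snd (h!t), s'')) (traj T I \<pi> (Suc t))) x)"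
      by (rule integral_measure_pmf_real) auto
    also have "\<dots> = (\<Sum>x\<in>UNIV. ?R x * (case x of (s,a,s') \<Rightarrow> step_prob T I \<pi> t s a s'))"
      by (rule sum.cong) (auto simp: step_prob_pmf split: prod.splits)
    finally show ?thesis .
  qed
  have "ret T I \<gamma> R \<pi> = (\<Sum>t. \<Sum>x\<in>UNIV. ?R x * (\<gamma> ^ t * (case x of (s,a,s') \<Rightarrow> step_prob T I \<pi> t s a s')))"
    unfolding ret_def e by (simp add: sum_distrib_left mult_ac)
  also have "\<dots> = (\<Sum>x\<in>UNIV. \<Sum>t. ?R x * (\<gamma> ^ t * (case x of (s,a,s') \<Rightarrow> step_prob T I \<pi> t s a s')))"
    by (rule suminf_sum) (auto split: prod.splits intro!: summable_mult summable_sp assms)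
  also have "\<dots> = (\<Sum>x\<in>UNIV. ?R x * occupancy T I \<gamma> \<pi> x)"
    by (rule sum.cong) (auto simp: occupancy_def split: prod.splits intro!: suminf_mult summable_sp assms)
  finally show ?thesis .
qed


definition dd where "dd T I \<gamma> \<pi> s = (\<Sum>t. \<gamma> ^ t * pmf (st T I \<pi> t) s)"

lemma summable_st:
  assumes "0 \<le> \<gamma>" "\<gamma> < 1"
  shows "summable (\<lambda>t. \<gamma> ^ t * pmf (st T I \<pi> t) s)"
proof (rule summable_comparison_test[where g="\<lambda>t. \<gamma> ^ t"])
  show "\<exists>N. \<forall>n\<ge>N. norm (\<gamma> ^ n * pmf (st T I \<pi> n) s) \<le> \<gamma> ^ n"
    using assms by (auto simp: abs_mult intro!: mult_left_le pmf_le_1)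
  show "summable (\<lambda>t. \<gamma> ^ t)" using assms by (simp add: summable_geometric)
qed

lemma sum_occ:
  fixes T :: "'s::finite \<Rightarrow> 'a::finite \<Rightarrow> 's pmf"
  assumes "0 \<le> \<gamma>" "\<gamma> < 1"
  shows "(\<Sum>s'\<in>UNIV. occupancy T I \<gamma> \<pi> (s,a,s')) = dd T I \<gamma> \<pi> s * pmf (\<pi> s) a"
proof -
  have "(\<Sum>s'\<in>UNIV. occupancy T I \<gamma> \<pi> (s,a,s')) = (\<Sum>s'\<in>UNIV. \<Sum>t. \<gamma> ^ t * step_prob T I \<pi> t s a s')"
    by (simp add: occupancy_def)
  also have "\<dots> = (\<Sum>t. \<Sum>s'\<in>UNIV. \<gamma> ^ t * step_prob T I \<pi> t s a s')"
    by (rule suminf_sum[symmetric]) (auto intro!: summable_sp assms)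
  also have "\<dots> = (\<Sum>t. (\<gamma> ^ t * pmf (st T I \<pi> t) s) * pmf (\<pi> s) a)"
  proof (rule arg_cong[where f=suminf], rule ext)
    fix t
    have "(\<Sum>s'\<in>UNIV. \<gamma> ^ t * step_prob T I \<pi> t s a s') =
        (\<gamma> ^ t * pmf (st T I \<pi> t) s * pmf (\<pi> s) a) * (\<Sum>s'\<in>UNIV. pmf (T s a) s')"
      by (simp add: step_prob_eq sum_distrib_left sum_distrib_right mult_ac)
    also have "(\<Sum>s'\<in>UNIV. pmf (T s a) s') = 1" by (rule sum_pmf_eq_1) auto
    finally show "(\<Sum>s'\<in>UNIV. \<gamma> ^ t * step_prob T I \<pi> t s a s') = (\<gamma> ^ t * pmf (st T I \<pi> t) s) * pmf (\<pi> s) a"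
      by simp
  qed
  also have "\<dots> = dd T I \<gamma> \<pi> s * pmf (\<pi> s) a"
    unfolding dd_def by (rule suminf_mult2[symmetric]) (rule summable_st[OF assms])
  finally show ?thesis .
qed

lemma sum_occ2:
  fixes T :: "'s::finite \<Rightarrow> 'a::finite \<Rightarrow> 's pmf"
  assumes "0 \<le> \<gamma>" "\<gamma> < 1"
  shows "(\<Sum>a\<in>UNIV. \<Sum>s'\<in>UNIV. occupancy T I \<gamma> \<pi> (s,a,s')) = dd T I \<gamma> \<pi> s"
proof -
  have "(\<Sum>a\<in>UNIV. \<Sum>s'\<in>UNIV. occupancy T I \<gamma> \<pi> (s,a,s')) = dd T I \<gamma> \<pi> s * (\<Sum>a\<in>UNIV. pmf (\<pi> s) a)"
    by (simp add: sum_occ[OF assms] sum_distrib_left)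
  also have "(\<Sum>a\<in>UNIV. pmf (\<pi> s) a) = 1" by (rule sum_pmf_eq_1) auto
  finally show ?thesis by simp
qed

lemma dd_pos:
  assumes "0 < \<gamma>" "\<gamma> < 1" "s \<in> set_pmf (st T I \<pi> k)"
  shows "0 < dd T I \<gamma> \<pi> s"
proof -
  have "0 < \<gamma> ^ k * pmf (st T I \<pi> k) s"
    using assms by (simp add: pmf_positive)
  also have "\<dots> = sum (\<lambda>t. \<gamma> ^ t * pmf (st T I \<pi> t) s) {k}" by simp
  also have "\<dots> \<le> dd T I \<gamma> \<pi> s"
    unfolding dd_def using assms
    by (intro sum_le_suminf summable_st) auto
  finally show ?thesis .
qed

lemma occ_determines_traj:
  fixes T :: "'s::finite \<Rightarrow> 'a::finite \<Rightarrow> 's pmf"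
  assumes "0 < \<gamma>" "\<gamma> < 1" and eq: "occupancy T I \<gamma> \<pi>1 = occupancy T I \<gamma> \<pi>2"
  shows "traj T I \<pi>1 k = traj T I \<pi>2 k"
proof -
  have ddeq: "dd T I \<gamma> \<pi>1 s = dd T I \<gamma> \<pi>2 s" for s
    using sum_occ2[of \<gamma> T I \<pi>1 s] sum_occ2[of \<gamma> T I \<pi>2 s] assms eq by simp
  have pieq: "\<pi>1 s = \<pi>2 s" if "0 < dd T I \<gamma> \<pi>1 s" for s
  proof (rule pmf_eqI)
    fix a
    have "dd T I \<gamma> \<pi>1 s * pmf (\<pi>1 s) a = dd T I \<gamma> \<pi>2 s * pmf (\<pi>2 s) a"
      using sum_occ[of \<gamma> T I \<pi>1 s a] sum_occ[of \<gamma> T I \<pi>2 s a] assms eq by simp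
    then show "pmf (\<pi>1 s) a = pmf (\<pi>2 s) a" using that ddeq[of s] by simp
  qed
  show ?thesis
  proof (induction k)
    case 0
    then show ?case by simp
  next
    case (Suc k)
    show ?case
      unfolding traj.simps
    proof (rule bind_pmf_cong[OF Suc])
      fix x assume x: "x \<in> set_pmf (traj T I \<pi>2 k)"
      obtain h s where hs: "x = (h, s)" by (cases x)
      have "s \<in> set_pmf (st T I \<pi>1 k)" using x hs Suc by (force simp: st_def)
      then have "\<pi>1 s = \<pi>2 s" using dd_pos[of \<gamma> s T I \<pi>1 k] assms pieq by blast
      then show "(case x of (h, s) \<Rightarrow> \<pi>1 s \<bind> (\<lambda>a. map_pmf (\<lambda>s'. (h @ [(s, a)], s')) (T s a))) =
            (case x of (h, s) \<Rightarrow> \<pi>2 s \<bind> (\<lambda>a. map_pmf (\<lambda>s'. (h @ [(s, a)], s')) (T s a)))"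
        using hs by simp
    qed
  qed
qed




definition inv_ord where
  "inv_ord f ord \<longleftrightarrow> total_preorder_on UNIV ord \<and>
     (\<forall>p q p' q'. f p = f p' \<longrightarrow> f q = f q' \<longrightarrow> ord p q = ord p' q')"

lemma char:
  assumes "range f \<subseteq> D"
  shows "(\<exists>ge. total_preorder_on D ge \<and> ord = (\<lambda>p q. ge (f p) (f q))) \<longleftrightarrow> inv_ord f ord"
proof
  assume "\<exists>ge. total_preorder_on D ge \<and> ord = (\<lambda>p q. ge (f p) (f q))"
  then obtain ge where ge: "total_preorder_on D ge" "ord = (\<lambda>p q. ge (f p) (f q))" by blast
  have fD: "f p \<in> D" for p using assms by blast
  have r1: "\<And>x. x \<in> D \<Longrightarrow> ge x x"
    and r2: "\<And>x y z. x \<in> D \<Longrightarrow> y \<in> D \<Longrightarrow> z \<in> D \<Longrightarrow> ge x y \<Longrightarrow> ge y z \<Longrightarrow> ge x z"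
    and r3: "\<And>x y. x \<in> D \<Longrightarrow> y \<in> D \<Longrightarrow> ge x y \<or> ge y x"
    using ge(1) unfolding total_preorder_on_def by blast+
  have "total_preorder_on UNIV ord"
    unfolding total_preorder_on_def ge(2)
  proof (intro conjI ballI impI)
    fix x show "ge (f x) (f x)" by (rule r1[OF fD])
  next
    fix x y z assume "ge (f x) (f y)" "ge (f y) (f z)"
    then show "ge (f x) (f z)" by (rule r2[OF fD fD fD])
  next
    fix x y show "ge (f x) (f y) \<or> ge (f y) (f x)" by (rule r3[OF fD fD])
  qed
  then show "inv_ord f ord" unfolding inv_ord_def ge(2) by simp
next
  assume io: "inv_ord f ord"
  define ge where "ge x y \<longleftrightarrow> (x \<in> range f \<and> y \<in> range f \<and> ord (inv f x) (inv f y)) \<or> y \<notin> range f" for x y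
  have tp: "total_preorder_on UNIV ord" and iv: "\<And>p q p' q'. f p = f p' \<Longrightarrow> f q = f q' \<Longrightarrow> ord p q = ord p' q'"
    using io unfolding inv_ord_def by blast+
  have o1: "\<And>x. ord x x"
    and o2: "\<And>x y z. ord x y \<Longrightarrow> ord y z \<Longrightarrow> ord x z"
    and o3: "\<And>x y. ord x y \<or> ord y x"
    using tp unfolding total_preorder_on_def by blast+
  have "total_preorder_on D ge"
    unfolding total_preorder_on_def
  proof (intro conjI ballI impI)
    fix x assume "x \<in> D" show "ge x x" unfolding ge_def using o1 by blast
  next
    fix x y z assume "ge x y" "ge y z"
    show "ge x z"
    proof (cases "z \<in> range f")
      case True
      then have "y \<in> range f" "ord (inv f y) (inv f z)" using \<open>ge y z\<close> unfolding ge_def by auto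
      then have "x \<in> range f" "ord (inv f x) (inv f y)" using \<open>ge x y\<close> unfolding ge_def by auto
      then show ?thesis unfolding ge_def using o2 \<open>ord (inv f y) (inv f z)\<close> True by blast
    next
      case False
      then show ?thesis unfolding ge_def by blast
    qed
  next
    fix x y
    show "ge x y \<or> ge y x" unfolding ge_def using o3 by blast
  qed
  moreover have "ord = (\<lambda>p q. ge (f p) (f q))"
  proof (intro ext)
    fix p q
    have "f (inv f (f p)) = f p" "f (inv f (f q)) = f q" by (auto intro: f_inv_into_f)
    then have "ord (inv f (f p)) (inv f (f q)) = ord p q" using iv by blast
    then show "ord p q = ge (f p) (f q)" unfolding ge_def by auto
  qed
  ultimately show "\<exists>ge. total_preorder_on D ge \<and> ord = (\<lambda>p q. ge (f p) (f q))" by blast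
qed

lemma inv_mono: "inv_ord f ord \<Longrightarrow> (\<And>p q. g p = g q \<Longrightarrow> f p = f q) \<Longrightarrow> inv_ord g ord"
  unfolding inv_ord_def by blast

lemma G_eq: "ord \<in> Ord_GOMORL T I \<longleftrightarrow> (\<exists>k R \<gamma>. 0 \<le> \<gamma> \<and> \<gamma> < 1 \<and> inv_ord (ret_vec T I k \<gamma> R) ord)"
proof -
  have c: "\<And>k R \<gamma>. (\<exists>ge. total_preorder_on {v. length v = k} ge \<and> ord = (\<lambda>p q. ge (ret_vec T I k \<gamma> R p) (ret_vec T I k \<gamma> R q))) \<longleftrightarrow> inv_ord (ret_vec T I k \<gamma> R) ord"
    by (rule char) (auto simp: ret_vec_def)
  show ?thesis unfolding Ord_GOMORL_def mem_Collect_eq c[symmetric] by blast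
qed

lemma O_eq: "ord \<in> Ord_OMO T I \<longleftrightarrow> (\<exists>\<gamma>. 0 \<le> \<gamma> \<and> \<gamma> < 1 \<and> inv_ord (occupancy T I \<gamma>) ord)"
proof -
  have c: "\<And>\<gamma>. (\<exists>ge. total_preorder_on (range (occupancy T I \<gamma>)) ge \<and> ord = (\<lambda>p q. ge (occupancy T I \<gamma> p) (occupancy T I \<gamma> q))) \<longleftrightarrow> inv_ord (occupancy T I \<gamma>) ord"
    by (rule char) auto
  show ?thesis unfolding Ord_OMO_def mem_Collect_eq c[symmetric] by blast
qed

lemma T_eq: "ord \<in> Ord_TLO T I \<longleftrightarrow> inv_ord (lottery T I) ord"
proof -
  have c: "(\<exists>ge. total_preorder_on (range (lottery T I)) ge \<and> ord = (\<lambda>p q. ge (lottery T I p) (lottery T I q))) \<longleftrightarrow> inv_ord (lottery T I) ord"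
    by (rule char) auto
  show ?thesis unfolding Ord_TLO_def mem_Collect_eq c[symmetric] by blast
qed

theorem theorem3:
  fixes T :: "'s::finite \<Rightarrow> 'a::finite \<Rightarrow> 's pmf" and I :: "'s pmf"
  shows "Ord_GOMORL T I = Ord_OMO T I \<and> Ord_OMO T I = Ord_TLO T I"
proof -
  have GO: "Ord_GOMORL T I \<subseteq> Ord_OMO T I"
  proof
    fix ord assume "ord \<in> Ord_GOMORL T I"
    then obtain k R \<gamma> where g: "0 \<le> \<gamma>" "\<gamma> < 1" "inv_ord (ret_vec T I k \<gamma> R) ord"
      unfolding G_eq by blast
    have "inv_ord (occupancy T I \<gamma>) ord"
      by (rule inv_mono[OF g(3)]) (simp add: ret_vec_def ret_lin[OF g(1,2)])
    then show "ord \<in> Ord_OMO T I" unfolding O_eq using g by blast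
  qed
  have OT: "Ord_OMO T I \<subseteq> Ord_TLO T I"
  proof
    fix ord assume "ord \<in> Ord_OMO T I"
    then obtain \<gamma> where g: "0 \<le> \<gamma>" "\<gamma> < 1" "inv_ord (occupancy T I \<gamma>) ord"
      unfolding O_eq by blast
    have "inv_ord (lottery T I) ord"
      by (rule inv_mono[OF g(3)]) (simp add: lottery_def occupancy_def step_prob_def)
    then show "ord \<in> Ord_TLO T I" unfolding T_eq by blast
  qed
  have TG: "Ord_TLO T I \<subseteq> Ord_GOMORL T I"
  proof
    fix ord assume "ord \<in> Ord_TLO T I"
    then have io: "inv_ord (lottery T I) ord" unfolding T_eq by blast
    obtain xs :: "('s \<times> 'a \<times> 's) list" where xs: "set xs = UNIV" "distinct xs"
      using finite_distinct_list[of "UNIV :: ('s \<times> 'a \<times> 's) set"] by auto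
    define R where "R s a s' i = (if xs ! i = (s,a,s') then 1 else (0::real))" for s a s' i
    let ?g = "1/2 :: real"
    have rv: "ret_vec T I (length xs) ?g R \<pi> = map (\<lambda>i. occupancy T I ?g \<pi> (xs ! i)) [0..<length xs]" for \<pi>
    proof -
      have "ret T I ?g (\<lambda>s a s'. R s a s' i) \<pi> = occupancy T I ?g \<pi> (xs ! i)" for i
      proof -
        have "ret T I ?g (\<lambda>s a s'. R s a s' i) \<pi> =
           (\<Sum>x\<in>UNIV. if xs ! i = x then occupancy T I ?g \<pi> x else 0)"
          apply (subst ret_lin, simp, simp)
          apply (rule sum.cong, simp)
          apply (auto simp: R_def split: prod.splits)
          done
        also have "\<dots> = occupancy T I ?g \<pi> (xs ! i)" by (simp add: sum.delta)
        finally show ?thesis .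
      qed
      then show ?thesis by (simp add: ret_vec_def)
    qed
    have "inv_ord (ret_vec T I (length xs) ?g R) ord"
    proof (rule inv_mono[OF io])
      fix p q assume "ret_vec T I (length xs) ?g R p = ret_vec T I (length xs) ?g R q"
      then have "\<forall>i<length xs. occupancy T I ?g p (xs ! i) = occupancy T I ?g q (xs ! i)"
        unfolding rv by (simp add: map_eq_conv)
      then have "occupancy T I ?g p = occupancy T I ?g q"
        using xs(1) by (metis ext in_set_conv_nth UNIV_I)
      then show "lottery T I p = lottery T I q"
        unfolding lottery_def using occ_determines_traj[of ?g T I p q] by auto
    qed
    then show "ord \<in> Ord_GOMORL T I" unfolding G_eq using order.strict_trans1[of 0 "1/2::real" 1] by (intro exI conjI) auto
  qed
  show ?thesis using GO OT TG by blast
qed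

end
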